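(* Let $P$ be a rectangular box (brick) in $\mathbb{R}^3$ of volume $1$, all of whose edge lengths are at least $\frac{1}{\sqrt{2}}$. Let $e_1,e_2,e_3$ be three pairwise skew edges of $P$, and let $A\in e_1$, $B\in e_2$, $C\in e_3$ be the vertices of a regular (equilateral) triangle. Then the side length of the triangle $ABC$ is at most $\sqrt{2}$.
   Context: A brick is a rectangular parallelepiped (box with pairwise orthogonal edge directions). Edges of the brick are its twelve closed edge segments. Three edges are pairwise skew if no two of them are parallel and no two intersect; in a brick such a triple consists of one edge from each of the three edge directions. "The vertices of a triangle lie on the skew edges of the brick" means each vertex lies on a different edge of such a triple. *)

theory Defs
  imports "HOL-Analysis.Analysis"
begin

text \<open>A brick in R^3 is given by a vertex P0 and three pairwise orthogonal edge vectors
u, v, w; its points are P0 + s u + t v + r w with s, t, r in [0,1].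
Edges parallel to v resp. w are obtained by cyclically permuting u, v, w.\<close>

definition brick_edge :: "real^3 \<Rightarrow> real^3 \<Rightarrow> real^3 \<Rightarrow> real^3 \<Rightarrow> real \<Rightarrow> real \<Rightarrow> (real^3) set" where
  "brick_edge P0 u v w i j = closed_segment (P0 + i *\<^sub>R v + j *\<^sub>R w) (P0 + u + i *\<^sub>R v + j *\<^sub>R w)"

end

theory Submission
  imports Defs
begin

lemma gt1:
  fixes X D :: real
  assumes "X \<ge> 1/2" "D \<ge> X" "X*(3*D^2 - 4*X*D) \<le> 4" "D > 2"
  shows "X > 1"
proof (rule ccontr)
  assume "\<not> X > 1" hence X1: "X \<le> 1" by simp
  have "(D-2)*(3*D+6-4*X) > 0" using assms X1 by (intro mult_pos_pos) auto
  hence "3*D^2 - 4*X*D > 12 - 8*X" by (simp add: algebra_simps power2_eq_square)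
  hence "X*(3*D^2 - 4*X*D) > X*(12 - 8*X)" using assms by (intro mult_strict_left_mono) auto
  moreover have "X*(12-8*X) \<ge> 4"
  proof -
    have "(2*X-1)*(1-X) \<ge> 0" using assms X1 by (intro mult_nonneg_nonneg) auto
    thus ?thesis by (simp add: algebra_simps)
  qed
  ultimately show False using assms by linarith
qed

lemma edge_iff:
  "x \<in> brick_edge P0 u v w i j \<longleftrightarrow> (\<exists>s. 0\<le>s \<and> s\<le>1 \<and> x = P0 + s*\<^sub>R u + i*\<^sub>R v + j*\<^sub>R w)"
  unfolding brick_edge_def closed_segment_def
  apply (auto simp: algebra_simps)
  done

lemma nsq:
  fixes u v w :: "real^3"
  assumes "u \<bullet> v = 0" "v \<bullet> w = 0" "w \<bullet> u = 0"
  shows "norm (a*\<^sub>R u + b*\<^sub>R v + c*\<^sub>R w)^2 = a^2*(u\<bullet>u) + b^2*(v\<bullet>v) + c^2*(w\<bullet>w)"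
proof -
  have e: "v \<bullet> u = 0" "w \<bullet> v = 0" "u \<bullet> w = 0" using assms by (simp_all add: inner_commute)
  show ?thesis unfolding power2_norm_eq_inner
    by (simp add: inner_add_left inner_add_right assms e power2_eq_square)
qed

lemma cases01: "(i::real) \<in> {0,1} \<Longrightarrow> j \<in> {0,1} \<Longrightarrow> i \<noteq> j \<Longrightarrow> (j = 1 - i)" by auto

lemma bil:
  fixes t r :: real
  assumes "0\<le>t" "t\<le>1" "0\<le>r" "r\<le>1"
  shows "0 \<le> t*r" "t*r \<le> 1" "0 \<le> (1-t)*r" "(1-t)*r \<le> 1" "0 \<le> t*(1-r)" "t*(1-r)\<le>1" "0\<le>(1-t)*(1-r)" "(1-t)*(1-r) \<le> 1"
  using assms by (auto intro: mult_le_one)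

lemma crossX:
  fixes t r i1 j3 i2 j1 :: real
  assumes "0\<le>t" "t\<le>1" "0\<le>r" "r\<le>1" "i1 \<in> {0,1}" "j3 = 1 - i1" "i2 \<in> {0,1}" "j1 = 1 - i2"
  shows "((i1-t)*(i2-r) - (j1-i2)*(t-j3))^2 \<le> 1"
proof -
  have "-1 \<le> (i1-t)*(i2-r) - (j1-i2)*(t-j3) \<and> (i1-t)*(i2-r) - (j1-i2)*(t-j3) \<le> 1"
    using assms bil[OF assms(1-4)] by (auto simp: algebra_simps)
  thus ?thesis by (simp add: abs_square_le_1 abs_le_iff)
qed
lemma crossY:
  fixes s r j2 i3 i2 j1 :: real
  assumes "0\<le>s" "s\<le>1" "0\<le>r" "r\<le>1" "j2 \<in> {0,1}" "i3 = 1 - j2" "i2 \<in> {0,1}" "j1 = 1 - i2"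
  shows "((j1-i2)*(j2-i3) - (s-j2)*(i2-r))^2 \<le> 1"
proof -
  have "-1 \<le> (j1-i2)*(j2-i3) - (s-j2)*(i2-r) \<and> (j1-i2)*(j2-i3) - (s-j2)*(i2-r) \<le> 1"
    using assms bil[OF assms(1-4)] by (auto simp: algebra_simps)
  thus ?thesis by (simp add: abs_square_le_1 abs_le_iff)
qed
lemma crossZ:
  fixes s t j2 i3 i1 j3 :: real
  assumes "0\<le>s" "s\<le>1" "0\<le>t" "t\<le>1" "j2 \<in> {0,1}" "i3 = 1 - j2" "i1 \<in> {0,1}" "j3 = 1 - i1"
  shows "((s-j2)*(t-j3) - (i1-t)*(j2-i3))^2 \<le> 1"
proof -
  have "-1 \<le> (s-j2)*(t-j3) - (i1-t)*(j2-i3) \<and> (s-j2)*(t-j3) - (i1-t)*(j2-i3) \<le> 1"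
    using assms bil[OF assms(1-4)] by (auto simp: algebra_simps)
  thus ?thesis by (simp add: abs_square_le_1 abs_le_iff)
qed
lemma sumsq:
  fixes s j2 i3 :: real
  assumes "0\<le>s" "s\<le>1" "j2 \<in> {0,1}" "i3 = 1 - j2"
  shows "(s-j2)^2 + (j2-i3)^2 + (i3-s)^2 \<le> 2"
  using assms bil[OF assms(1,2) assms(1,2)] by (auto simp: power2_eq_square algebra_simps)

lemma core:
  fixes X Y Z D a1 a2 a3 b1 b2 b3 c1 c2 c3 :: real
  assumes "a1+a2+a3=0" "b1+b2+b3=0" "c1+c2+c3=0"
   "D = X*a1^2+Y*b1^2+Z*c1^2" "D = X*a2^2+Y*b2^2+Z*c2^2" "D = X*a3^2+Y*b3^2+Z*c3^2"
  shows "4*Y*Z*(b1*c2-c1*b2)^2 = 3*D^2 - 2*D*X*(a1^2+a2^2+a3^2)"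
  using assms by algebra

lemma keyineq:
  fixes X Y Z D S K :: real
  assumes "4*Y*Z*K = 3*D^2 - 2*D*X*S" "K \<le> 1" "S \<le> 2" "D \<ge> 0" "X \<ge> 0" "Y\<ge>0" "Z\<ge>0" "X*Y*Z = 1"
  shows "X*(3*D^2 - 4*X*D) \<le> 4"
proof -
  have "D*X*S \<le> D*X*2" using assms by (intro mult_left_mono) auto
  moreover have "Y*Z*K \<le> Y*Z" using assms mult_left_mono[of K 1 "Y*Z"] by auto
  ultimately have "3*D^2 - 4*X*D \<le> 4*Y*Z" using assms(1) by (simp add: algebra_simps)
  hence "X*(3*D^2 - 4*X*D) \<le> X*(4*Y*Z)" using assms by (intro mult_left_mono) auto
  thus ?thesis using assms by (simp add: algebra_simps)
qed


theorem mainTheorem2: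
  fixes P0 u v w A B C :: "real^3" and i1 j1 i2 j2 i3 j3 :: real
  assumes orth: "u \<bullet> v = 0" "v \<bullet> w = 0" "w \<bullet> u = 0"
    and vol: "norm u * norm v * norm w = 1"
    and len: "norm u \<ge> 1 / sqrt 2" "norm v \<ge> 1 / sqrt 2" "norm w \<ge> 1 / sqrt 2"
    and idx: "i1 \<in> {0,1}" "j1 \<in> {0,1}" "i2 \<in> {0,1}" "j2 \<in> {0,1}" "i3 \<in> {0,1}" "j3 \<in> {0,1}"
    and skew: "brick_edge P0 u v w i1 j1 \<inter> brick_edge P0 v w u i2 j2 = {}"
              "brick_edge P0 v w u i2 j2 \<inter> brick_edge P0 w u v i3 j3 = {}"
              "brick_edge P0 w u v i3 j3 \<inter> brick_edge P0 u v w i1 j1 = {}"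
    and verts: "A \<in> brick_edge P0 u v w i1 j1" "B \<in> brick_edge P0 v w u i2 j2"
               "C \<in> brick_edge P0 w u v i3 j3"
    and equi: "A \<noteq> B" "dist A B = dist B C" "dist B C = dist C A"
  shows "dist A B \<le> sqrt 2"
  proof -
  define X where "X = u \<bullet> u"
  define Y where "Y = v \<bullet> v"
  define Z where "Z = w \<bullet> w"
  have nX: "norm u ^ 2 = X" "norm v ^ 2 = Y" "norm w ^ 2 = Z"
    unfolding X_def Y_def Z_def by (simp_all add: power2_norm_eq_inner)
  have X0: "X \<ge> 0" "Y \<ge> 0" "Z \<ge> 0" unfolding X_def Y_def Z_def by simp_all
  have XYZ: "X*Y*Z = 1"
  proof -
    have "(norm u * norm v * norm w)^2 = 1" using vol by simp
    thus ?thesis using nX by (simp add: power_mult_distrib)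
  qed
  have half: "(1/sqrt 2)^2 = (1/2::real)" by (simp add: power_divide)
  have Xh: "X \<ge> 1/2" "Y \<ge> 1/2" "Z \<ge> 1/2"
  proof -
    have "(1/sqrt 2)^2 \<le> norm u ^2" using len(1) by (intro power_mono) auto
    thus "X \<ge> 1/2" using nX half by simp
    have "(1/sqrt 2)^2 \<le> norm v ^2" using len(2) by (intro power_mono) auto
    thus "Y \<ge> 1/2" using nX half by simp
    have "(1/sqrt 2)^2 \<le> norm w ^2" using len(3) by (intro power_mono) auto
    thus "Z \<ge> 1/2" using nX half by simp
  qed
  obtain s where s: "0\<le>s" "s\<le>1" "A = P0 + s*\<^sub>R u + i1*\<^sub>R v + j1*\<^sub>R w"
    using verts(1) edge_iff by blast
  obtain t where t: "0\<le>t" "t\<le>1" "B = P0 + t*\<^sub>R v + i2*\<^sub>R w + j2*\<^sub>R u"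
    using verts(2) edge_iff by blast
  obtain r where r: "0\<le>r" "r\<le>1" "C = P0 + r*\<^sub>R w + i3*\<^sub>R u + j3*\<^sub>R v"
    using verts(3) edge_iff by blast
  have i01: "0 \<le> i" "i \<le> 1" if "i \<in> {0::real,1}" for i using that by auto
  have ne1: "j1 \<noteq> i2"
  proof
    assume e: "j1 = i2"
    let ?Q = "P0 + j2*\<^sub>R u + i1*\<^sub>R v + j1*\<^sub>R w"
    have "?Q \<in> brick_edge P0 u v w i1 j1" unfolding edge_iff using i01[OF idx(4)] by blast
    moreover have "?Q \<in> brick_edge P0 v w u i2 j2" unfolding edge_iff using i01[OF idx(1)] e
      by (intro exI[of _ i1]) (auto simp: algebra_simps)
    ultimately show False using skew(1) by blast
  qed
  have ne2: "j2 \<noteq> i3"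
  proof
    assume e: "j2 = i3"
    let ?Q = "P0 + j3*\<^sub>R v + i2*\<^sub>R w + j2*\<^sub>R u"
    have "?Q \<in> brick_edge P0 v w u i2 j2" unfolding edge_iff using i01[OF idx(6)] by blast
    moreover have "?Q \<in> brick_edge P0 w u v i3 j3" unfolding edge_iff using i01[OF idx(3)] e
      by (intro exI[of _ i2]) (auto simp: algebra_simps)
    ultimately show False using skew(2) by blast
  qed
  have ne3: "j3 \<noteq> i1"
  proof
    assume e: "j3 = i1"
    let ?Q = "P0 + j1*\<^sub>R w + i3*\<^sub>R u + j3*\<^sub>R v"
    have "?Q \<in> brick_edge P0 w u v i3 j3" unfolding edge_iff using i01[OF idx(2)] by blast
    moreover have "?Q \<in> brick_edge P0 u v w i1 j1" unfolding edge_iff using i01[OF idx(5)] e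
      by (intro exI[of _ i3]) (auto simp: algebra_simps)
    ultimately show False using skew(3) by blast
  qed
  have e1: "j1 = 1 - i2" using idx ne1 by auto
  have e2: "i3 = 1 - j2" using idx ne2 by auto
  have e3: "j3 = 1 - i1" using idx ne3 by auto
  have e1': "i2 = 1 - j1" using e1 by simp
  have e2': "j2 = 1 - i3" using e2 by simp
  define D where "D = dist A B ^ 2"
  have AB: "A - B = (s-j2)*\<^sub>R u + (i1-t)*\<^sub>R v + (j1-i2)*\<^sub>R w"
    using s t by (simp add: algebra_simps)
  have BC: "B - C = (j2-i3)*\<^sub>R u + (t-j3)*\<^sub>R v + (i2-r)*\<^sub>R w"
    using t r by (simp add: algebra_simps)
  have CA: "C - A = (i3-s)*\<^sub>R u + (j3-i1)*\<^sub>R v + (r-j1)*\<^sub>R w"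
    using s r by (simp add: algebra_simps)
  have d1: "D = X*(s-j2)^2 + Y*(i1-t)^2 + Z*(j1-i2)^2"
    unfolding D_def dist_norm AB nsq[OF orth] X_def Y_def Z_def by (simp add: algebra_simps)
  have d2: "D = X*(j2-i3)^2 + Y*(t-j3)^2 + Z*(i2-r)^2"
    unfolding D_def equi(2) unfolding dist_norm BC nsq[OF orth] X_def Y_def Z_def by (simp add: algebra_simps)
  have d3: "D = X*(i3-s)^2 + Y*(j3-i1)^2 + Z*(r-j1)^2"
    unfolding D_def equi(2) equi(3) unfolding dist_norm CA nsq[OF orth] X_def Y_def Z_def by (simp add: algebra_simps)
  have sq01: "(a - b)^2 = (1::real)" if "b \<in> {0,1}" "a = 1 - b" for a b
    using that by (auto simp: power2_eq_square)
  have sq1: "(j1-i2)^2 = 1" "(j2-i3)^2 = 1" "(j3-i1)^2 = 1"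
    using sq01[OF idx(3) e1] sq01[OF idx(5) e2'] sq01[OF idx(1) e3] by (simp_all add: power2_commute)
  have D0: "D \<ge> 0" unfolding D_def by simp
  have nn: "X*a^2 \<ge> 0" "Y*a^2 \<ge> 0" "Z*a^2 \<ge> 0" for a using X0 by simp_all
  have DX: "D \<ge> X" "D \<ge> Y" "D \<ge> Z"
  proof -
    show "D \<ge> X" using d2 sq1(2) nn[of "t-j3"] nn[of "i2-r"] by simp
    show "D \<ge> Y" using d3 sq1(3) nn[of "i3-s"] nn[of "r-j1"] by simp
    show "D \<ge> Z" using d1 sq1(1) nn[of "s-j2"] nn[of "i1-t"] by simp
  qed
  have z1: "(s-j2)+(j2-i3)+(i3-s) = 0" "(i1-t)+(t-j3)+(j3-i1) = 0" "(j1-i2)+(i2-r)+(r-j1) = 0" by simp_all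
  have cX: "4*Y*Z*((i1-t)*(i2-r) - (j1-i2)*(t-j3))^2 = 3*D^2 - 2*D*X*((s-j2)^2+(j2-i3)^2+(i3-s)^2)"
    by (rule core[OF z1 d1 d2 d3])
  have dY: "D = Y*(i1-t)^2 + Z*(j1-i2)^2 + X*(s-j2)^2" "D = Y*(t-j3)^2 + Z*(i2-r)^2 + X*(j2-i3)^2"
     "D = Y*(j3-i1)^2 + Z*(r-j1)^2 + X*(i3-s)^2"
    using d1 d2 d3 by linarith+
  have dZ: "D = Z*(j1-i2)^2 + X*(s-j2)^2 + Y*(i1-t)^2" "D = Z*(i2-r)^2 + X*(j2-i3)^2 + Y*(t-j3)^2"
     "D = Z*(r-j1)^2 + X*(i3-s)^2 + Y*(j3-i1)^2"
    using d1 d2 d3 by linarith+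
  have cY: "4*Z*X*((j1-i2)*(j2-i3) - (s-j2)*(i2-r))^2 = 3*D^2 - 2*D*Y*((i1-t)^2+(t-j3)^2+(j3-i1)^2)"
    by (rule core[OF z1(2) z1(3) z1(1) dY])
  have cZ: "4*X*Y*((s-j2)*(t-j3) - (i1-t)*(j2-i3))^2 = 3*D^2 - 2*D*Z*((j1-i2)^2+(i2-r)^2+(r-j1)^2)"
    by (rule core[OF z1(3) z1(1) z1(2) dZ])
  have SX: "(s-j2)^2+(j2-i3)^2+(i3-s)^2 \<le> 2" by (rule sumsq[OF s(1) s(2) idx(4) e2])
  have SY: "(i1-t)^2+(t-j3)^2+(j3-i1)^2 \<le> 2"
  proof -
    have "(t-i1)^2+(i1-j3)^2+(j3-t)^2 \<le> 2" by (rule sumsq[OF t(1) t(2) idx(1) e3])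
    thus ?thesis by (simp add: power2_commute)
  qed
  have SZ: "(j1-i2)^2+(i2-r)^2+(r-j1)^2 \<le> 2"
  proof -
    have j1i: "j1 \<in> {0,1}" by (rule idx(2))
    have "(r-j1)^2+(j1-i2)^2+(i2-r)^2 \<le> 2" by (rule sumsq[OF r(1) r(2) j1i e1'])
    thus ?thesis by simp
  qed
  have kxX: "((i1-t)*(i2-r) - (j1-i2)*(t-j3))^2 \<le> 1" by (rule crossX[OF t(1) t(2) r(1) r(2) idx(1) e3 idx(3) e1])
  have kxY: "((j1-i2)*(j2-i3) - (s-j2)*(i2-r))^2 \<le> 1" by (rule crossY[OF s(1) s(2) r(1) r(2) idx(4) e2 idx(3) e1])
  have kxZ: "((s-j2)*(t-j3) - (i1-t)*(j2-i3))^2 \<le> 1" by (rule crossZ[OF s(1) s(2) t(1) t(2) idx(4) e2 idx(1) e3])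
  have YZX: "Y*Z*X = 1" "Z*X*Y = 1" using XYZ by (simp_all add: ac_simps)
  have kX: "X*(3*D^2 - 4*X*D) \<le> 4" by (rule keyineq[OF cX kxX SX D0 X0(1) X0(2) X0(3) XYZ])
  have kY: "Y*(3*D^2 - 4*Y*D) \<le> 4" by (rule keyineq[OF cY kxY SY D0 X0(2) X0(3) X0(1) YZX(1)])
  have kZ: "Z*(3*D^2 - 4*Z*D) \<le> 4" by (rule keyineq[OF cZ kxZ SZ D0 X0(3) X0(1) X0(2) YZX(2)])
  have "D \<le> 2"
  proof (rule ccontr)
    assume "\<not> D \<le> 2" hence D2: "D > 2" by simp
    have "X > 1" by (rule gt1[OF Xh(1) DX(1) kX D2])
    moreover have "Y > 1" by (rule gt1[OF Xh(2) DX(2) kY D2])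
    moreover have "Z > 1" by (rule gt1[OF Xh(3) DX(3) kZ D2])
    ultimately have "X*Y > 1" using less_1_mult by blast
    hence "X*Y*Z > 1" using \<open>Z > 1\<close> less_1_mult by blast
    thus False using XYZ by simp
  qed
  thus ?thesis unfolding D_def by (intro real_le_rsqrt)
qed

end
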